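(* Let $n\ge 1$ and let $\sigma,\tau\in S_n$. For every $i\in[n]$ the following hold: (i) $\sigma(i)\le i+c_i(\sigma)$; (ii) $c_i(\sigma\tau)\le c_i(\tau)+c_{\tau(i)}(\sigma)$; (iii) the map $\sigma^{-1}$ restricts to a bijection from $A(\sigma^{-1})_{\sigma(i)}$ onto $A(\sigma)_i$; in particular $i+c_i(\sigma)=\sigma(i)+c_{\sigma(i)}(\sigma^{-1})$.
   Context: $[n]=\{1,\dots,n\}$ and $S_n$ is the group of permutations of $[n]$. Composition is $(\sigma\tau)(i)=\sigma(\tau(i))$. For $\sigma\in S_n$ and $i\in[n]$ let $C(\sigma)_i=\{j\in[n]: j>i \text{ and } \sigma(j)<\sigma(i)\}$, $c_i(\sigma)=|C(\sigma)_i|$ (so $[c_1(\sigma),\dots,c_n(\sigma)]$ is the Lehmer code of $\sigma$), and $A(\sigma)_i=[i]\cup C(\sigma)_i$. *)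

theory Defs
  imports "HOL-Combinatorics.Permutations"
begin

text \<open>Permutations of [n] = {1..n} are functions nat => nat that permute {1..n}
  (identity outside). Composition is function composition.\<close>

definition lehmer_C :: "nat \<Rightarrow> (nat \<Rightarrow> nat) \<Rightarrow> nat \<Rightarrow> nat set" where
  "lehmer_C n \<sigma> i = {j \<in> {1..n}. j > i \<and> \<sigma> j < \<sigma> i}"

definition lehmer_c :: "nat \<Rightarrow> (nat \<Rightarrow> nat) \<Rightarrow> nat \<Rightarrow> nat" where
  "lehmer_c n \<sigma> i = card (lehmer_C n \<sigma> i)"

definition lehmer_A :: "nat \<Rightarrow> (nat \<Rightarrow> nat) \<Rightarrow> nat \<Rightarrow> nat set" where
  "lehmer_A n \<sigma> i = {1..i} \<union> lehmer_C n \<sigma> i"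

end

theory Submission
  imports Defs
begin

lemma pin: "p permutes S \<Longrightarrow> x \<in> S \<Longrightarrow> p x \<in> S"
  by (simp only: permutes_in_image)

lemma part3:
  fixes n i :: nat and \<sigma> :: "nat \<Rightarrow> nat"
  assumes p: "\<sigma> permutes {1..n}" and i: "i \<in> {1..n}"
  shows "bij_betw (inv \<sigma>) (lehmer_A n (inv \<sigma>) (\<sigma> i)) (lehmer_A n \<sigma> i)"
proof -
  have inj: "inj (inv \<sigma>)" using p permutes_inv permutes_inj by blast
  have si: "\<sigma> i \<in> {1..n}" using pin[OF p i] .
  have img: "inv \<sigma> ` (lehmer_A n (inv \<sigma>) (\<sigma> i)) = lehmer_A n \<sigma> i"
  proof
    show "inv \<sigma> ` lehmer_A n (inv \<sigma>) (\<sigma> i) \<subseteq> lehmer_A n \<sigma> i"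
    proof
      fix k assume "k \<in> inv \<sigma> ` lehmer_A n (inv \<sigma>) (\<sigma> i)"
      then obtain j where j: "j \<in> lehmer_A n (inv \<sigma>) (\<sigma> i)" and k: "k = inv \<sigma> j" by blast
      have jS: "j \<in> {1..n}" using j si unfolding lehmer_A_def lehmer_C_def by auto
      have kS: "k \<in> {1..n}" unfolding k by (rule pin[OF permutes_inv[OF p] jS])
      have sk: "\<sigma> k = j" using k p permutes_inverses(1) by metis
      have ik: "inv \<sigma> (\<sigma> i) = i" using p permutes_inverses(2) by metis
      have "k = i \<Longrightarrow> \<sigma> k = \<sigma> i" by simp
      have ne: "k \<noteq> i \<Longrightarrow> \<sigma> k \<noteq> \<sigma> i" using p permutes_inj by (metis injD)
      show "k \<in> lehmer_A n \<sigma> i"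
        using j sk ik kS ne k unfolding lehmer_A_def lehmer_C_def by auto
    qed
  next
    show "lehmer_A n \<sigma> i \<subseteq> inv \<sigma> ` lehmer_A n (inv \<sigma>) (\<sigma> i)"
    proof
      fix k assume k: "k \<in> lehmer_A n \<sigma> i"
      have kS: "k \<in> {1..n}" using k i unfolding lehmer_A_def lehmer_C_def by auto
      have skS: "\<sigma> k \<in> {1..n}" by (rule pin[OF p kS])
      have ks: "inv \<sigma> (\<sigma> k) = k" using p permutes_inverses(2) by metis
      have ik: "inv \<sigma> (\<sigma> i) = i" using p permutes_inverses(2) by metis
      have ne: "k \<noteq> i \<Longrightarrow> \<sigma> k \<noteq> \<sigma> i" using p permutes_inj by (metis injD)
      have "\<sigma> k \<in> lehmer_A n (inv \<sigma>) (\<sigma> i)"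
        using k skS ks ik ne kS unfolding lehmer_A_def lehmer_C_def
        by (cases "\<sigma> k \<le> \<sigma> i"; cases "k = i") auto
      then show "k \<in> inv \<sigma> ` lehmer_A n (inv \<sigma>) (\<sigma> i)" using ks by (metis image_eqI)
    qed
  qed
  show ?thesis using img inj unfolding bij_betw_def by (metis inj_on_subset subset_UNIV)
qed

lemma cardA:
  assumes "i \<in> {1..n}"
  shows "card (lehmer_A n \<sigma> i) = i + lehmer_c n \<sigma> i"
proof -
  have "{1..i} \<inter> lehmer_C n \<sigma> i = {}" unfolding lehmer_C_def by auto
  moreover have "finite (lehmer_C n \<sigma> i)" unfolding lehmer_C_def by auto
  ultimately have "card ({1..i} \<union> lehmer_C n \<sigma> i) = card {1..i} + card (lehmer_C n \<sigma> i)"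
    by (intro card_Un_disjoint) auto
  then show ?thesis unfolding lehmer_A_def lehmer_c_def by simp
qed

lemma part2:
  fixes n i :: nat and \<sigma> \<tau> :: "nat \<Rightarrow> nat"
  assumes ps: "\<sigma> permutes {1..n}" and pt: "\<tau> permutes {1..n}" and i: "i \<in> {1..n}"
  shows "lehmer_c n (\<sigma> \<circ> \<tau>) i \<le> lehmer_c n \<tau> i + lehmer_c n \<sigma> (\<tau> i)"
proof -
  let ?B = "{j \<in> {1..n}. \<tau> j \<in> lehmer_C n \<sigma> (\<tau> i)}"
  have injt: "inj \<tau>" using pt permutes_inj by blast
  have sub: "lehmer_C n (\<sigma> \<circ> \<tau>) i \<subseteq> lehmer_C n \<tau> i \<union> ?B"
  proof
    fix j assume j: "j \<in> lehmer_C n (\<sigma> \<circ> \<tau>) i"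
    have jS: "j \<in> {1..n}" using j unfolding lehmer_C_def by auto
    have tjS: "\<tau> j \<in> {1..n}" by (rule pin[OF pt jS])
    have ji: "j > i" and lt: "\<sigma> (\<tau> j) < \<sigma> (\<tau> i)" using j unfolding lehmer_C_def by auto
    have ne: "\<tau> j \<noteq> \<tau> i" using ji injt by (metis injD less_irrefl)
    show "j \<in> lehmer_C n \<tau> i \<union> ?B"
    proof (cases "\<tau> j < \<tau> i")
      case True
      then have "j \<in> lehmer_C n \<tau> i" using jS ji unfolding lehmer_C_def by simp
      then show ?thesis by blast
    next
      case False
      then have "\<tau> j > \<tau> i" using ne by simp
      then have "\<tau> j \<in> lehmer_C n \<sigma> (\<tau> i)" using tjS lt unfolding lehmer_C_def by simp
      then show ?thesis using jS by blast
    qed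
  qed
  have fin: "finite (lehmer_C n \<tau> i \<union> ?B)" unfolding lehmer_C_def by auto
  have "card ?B \<le> card (lehmer_C n \<sigma> (\<tau> i))"
  proof (rule card_inj_on_le[where f = \<tau>])
    show "inj_on \<tau> ?B" using injt by (simp add: inj_on_def inj_def)
    show "\<tau> ` ?B \<subseteq> lehmer_C n \<sigma> (\<tau> i)" by blast
    show "finite (lehmer_C n \<sigma> (\<tau> i))" unfolding lehmer_C_def by simp
  qed
  moreover have "card (lehmer_C n (\<sigma> \<circ> \<tau>) i) \<le> card (lehmer_C n \<tau> i \<union> ?B)"
    using card_mono[OF fin sub] .
  moreover have "card (lehmer_C n \<tau> i \<union> ?B) \<le> card (lehmer_C n \<tau> i) + card ?B"
    by (rule card_Un_le)
  ultimately show ?thesis unfolding lehmer_c_def by linarith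
qed

theorem lemma3p1:
  fixes n i :: nat and \<sigma> \<tau> :: "nat \<Rightarrow> nat"
  assumes "n \<ge> 1" and "\<sigma> permutes {1..n}" and "\<tau> permutes {1..n}" and "i \<in> {1..n}"
  shows "\<sigma> i \<le> i + lehmer_c n \<sigma> i
    \<and> lehmer_c n (\<sigma> \<circ> \<tau>) i \<le> lehmer_c n \<tau> i + lehmer_c n \<sigma> (\<tau> i)
    \<and> bij_betw (inv \<sigma>) (lehmer_A n (inv \<sigma>) (\<sigma> i)) (lehmer_A n \<sigma> i)
    \<and> i + lehmer_c n \<sigma> i = \<sigma> i + lehmer_c n (inv \<sigma>) (\<sigma> i)"
proof -
  have b: "bij_betw (inv \<sigma>) (lehmer_A n (inv \<sigma>) (\<sigma> i)) (lehmer_A n \<sigma> i)"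
    using part3 assms(2,4) .
  have si: "\<sigma> i \<in> {1..n}" by (rule pin[OF assms(2,4)])
  have e: "i + lehmer_c n \<sigma> i = \<sigma> i + lehmer_c n (inv \<sigma>) (\<sigma> i)"
    using bij_betw_same_card[OF b] cardA[OF si] cardA[OF assms(4)] by simp
  show ?thesis using b e part2[OF assms(2,3,4)] by linarith
qed

end
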